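(* Let $K\ge1$, $T\ge1$ and let $\ell_1,\dots,\ell_T\in[0,1]^K$. Then the regret of AdaHedge satisfies \[ \mathcal{R}^{\mathrm{ah}}_T\le 2\sqrt{V^{\mathrm{ah}}_T\ln K}+\tfrac43\ln K+2. \]
   Context: Hedge setting: $K$ experts; in round $t$ the learner chooses a probability vector $w_t$, then $\ell_t$ is revealed and the learner suffers $h_t=\sum_kw_{t,k}\ell_{t,k}$. Write $L_{t,k}=\sum_{s=1}^t\ell_{s,k}$ ($L_{0,k}=0$), $L^*_t=\min_kL_{t,k}$, $H_T=\sum_{t\le T}h_t$, regret $\mathcal{R}_T=H_T-L^*_T$. Exponential weights with learning rate $\eta\in(0,\infty]$ at time $t$: $w_{t,k}=e^{-\eta L_{t-1,k}}/\sum_je^{-\eta L_{t-1,j}}$ if $\eta<\infty$; for $\eta=\infty$, $w_t$ is uniform on $\{k:L_{t-1,k}=L^*_{t-1}\}$. With learning rate $\eta_t$ in round $t$: mix loss $m_t=-\frac1{\eta_t}\ln\sum_kw_{t,k}e^{-\eta_t\ell_{t,k}}$ if $\eta_t<\infty$, $m_t=L^*_t-L^*_{t-1}$ if $\eta_t=\infty$; mixability gap $\delta_t=h_t-m_t$; loss variance $v_t=\sum_kw_{t,k}(\ell_{t,k}-h_t)^2$. AdaHedge: $\Delta^{\mathrm{ah}}_0=0$; in round $t$, $\eta^{\mathrm{ah}}_t=\ln K/\Delta^{\mathrm{ah}}_{t-1}$ ($=\infty$ if $\Delta^{\mathrm{ah}}_{t-1}=0$), weights are exponential weights with learning rate $\eta^{\mathrm{ah}}_t$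 from $L_{t-1}$, and $\Delta^{\mathrm{ah}}_t=\Delta^{\mathrm{ah}}_{t-1}+\delta^{\mathrm{ah}}_t$. $V^{\mathrm{ah}}_T=\sum_{t=1}^Tv^{\mathrm{ah}}_t$ is the cumulative loss variance of AdaHedge's weights and $\mathcal{R}^{\mathrm{ah}}_T$ its regret. *)

theory Defs
  imports Complex_Main "HOL-Library.Extended_Real"
begin

text \<open>Experts are indexed by 0..K-1; the loss vector of round t (t \<ge> 1) is
  the function l t :: nat \<Rightarrow> real (values at k < K are relevant).
  A learning rate is an extended real, PInfty standing for eta = infinity.\<close>

definition cumL :: "(nat \<Rightarrow> nat \<Rightarrow> real) \<Rightarrow> nat \<Rightarrow> nat \<Rightarrow> real" where
  "cumL l t k = (\<Sum>s\<in>{1..t}. l s k)"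

definition Lstar :: "nat \<Rightarrow> (nat \<Rightarrow> nat \<Rightarrow> real) \<Rightarrow> nat \<Rightarrow> real" where
  "Lstar K l t = Min ((cumL l t) ` {..<K})"

definition exp_weights :: "nat \<Rightarrow> ereal \<Rightarrow> (nat \<Rightarrow> real) \<Rightarrow> nat \<Rightarrow> real" where
  "exp_weights K eta Lv k =
     (if eta = PInfty then
        (let m = Min (Lv ` {..<K}) in
         if Lv k = m then 1 / real (card {j\<in>{..<K}. Lv j = m}) else 0)
      else exp (- real_of_ereal eta * Lv k) /
             (\<Sum>j<K. exp (- real_of_ereal eta * Lv j)))"

definition hedge_loss :: "nat \<Rightarrow> (nat \<Rightarrow> real) \<Rightarrow> (nat \<Rightarrow> real) \<Rightarrow> real" where
  "hedge_loss K w lv = (\<Sum>k<K. w k * lv k)"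

definition mix_loss :: "nat \<Rightarrow> (nat \<Rightarrow> nat \<Rightarrow> real) \<Rightarrow> nat \<Rightarrow> ereal \<Rightarrow> (nat \<Rightarrow> real) \<Rightarrow> real" where
  "mix_loss K l t eta w =
     (if eta = PInfty then Lstar K l t - Lstar K l (t - 1)
      else - (1 / real_of_ereal eta) *
             ln (\<Sum>k<K. w k * exp (- real_of_ereal eta * l t k)))"

definition ah_eta :: "nat \<Rightarrow> real \<Rightarrow> ereal" where
  "ah_eta K D = (if D = 0 then PInfty else ereal (ln (real K) / D))"

definition ah_gap :: "nat \<Rightarrow> (nat \<Rightarrow> nat \<Rightarrow> real) \<Rightarrow> nat \<Rightarrow> real \<Rightarrow> real" where
  "ah_gap K l t D =
     (let eta = ah_eta K D; w = exp_weights K eta (cumL l (t - 1))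
      in hedge_loss K w (l t) - mix_loss K l t eta w)"

primrec ah_Delta :: "nat \<Rightarrow> (nat \<Rightarrow> nat \<Rightarrow> real) \<Rightarrow> nat \<Rightarrow> real" where
  "ah_Delta K l 0 = 0"
| "ah_Delta K l (Suc t) = ah_Delta K l t + ah_gap K l (Suc t) (ah_Delta K l t)"

definition ah_weights :: "nat \<Rightarrow> (nat \<Rightarrow> nat \<Rightarrow> real) \<Rightarrow> nat \<Rightarrow> nat \<Rightarrow> real" where
  "ah_weights K l t = exp_weights K (ah_eta K (ah_Delta K l (t - 1))) (cumL l (t - 1))"

definition ah_h :: "nat \<Rightarrow> (nat \<Rightarrow> nat \<Rightarrow> real) \<Rightarrow> nat \<Rightarrow> real" where
  "ah_h K l t = hedge_loss K (ah_weights K l t) (l t)"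

definition ah_regret :: "nat \<Rightarrow> (nat \<Rightarrow> nat \<Rightarrow> real) \<Rightarrow> nat \<Rightarrow> real" where
  "ah_regret K l T = (\<Sum>t\<in>{1..T}. ah_h K l t) - Lstar K l T"

definition ah_var :: "nat \<Rightarrow> (nat \<Rightarrow> nat \<Rightarrow> real) \<Rightarrow> nat \<Rightarrow> real" where
  "ah_var K l T = (\<Sum>t\<in>{1..T}. \<Sum>k<K. ah_weights K l t k * (l t k - ah_h K l t)^2)"

end

theory Submission
  imports Defs "HOL-Analysis.Convex"
begin


lemma exp_conv_p:
  fixes p y :: real assumes "0 \<le> p" "p \<le> 1"
  shows "exp (p * y) \<le> 1 + p * (exp y - 1)"
proof -
  have "exp ((1 - p) *\<^sub>R 0 + p *\<^sub>R y) \<le> (1 - p) * exp 0 + p * exp y"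
    by (rule convex_onD[OF exp_convex]) (use assms in auto)
  then show ?thesis by (simp add: algebra_simps)
qed

lemma exp_neg_bound:
  fixes x :: real assumes "x \<le> 0"
  shows "exp x \<le> 1 + x + x^2/2"
proof -
  let ?g = "\<lambda>y::real. exp y - 1 - y - y^2/2"
  have "?g x \<le> ?g 0"
  proof (rule DERIV_nonneg_imp_nondecreasing[OF assms])
    fix y :: real
    show "\<exists>d. DERIV ?g y :> d \<and> d \<ge> 0"
      by (rule exI[of _ "exp y - 1 - y"]) (auto intro!: derivative_eq_intros simp: algebra_simps)
  qed
  then show ?thesis by simp
qed

lemma fact_bound: "2 * 3^n \<le> (fact (n+2) :: real)"
proof (induction n)
  case 0 then show ?case by (simp add: numeral_2_eq_2)
next
  case (Suc n)
  have e: "fact (Suc n + 2) = real (Suc n + 2) * (fact (n+2)::real)"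
    by (metis add_Suc fact_Suc of_nat_fact)
  have "3 * (fact (n+2)::real) \<le> real (Suc n + 2) * fact (n+2)"
    by (rule mult_right_mono) auto
  have "(2::real) * 3 ^ Suc n = 3 * (2 * 3 ^ n)" by simp
  also have "\<dots> \<le> 3 * fact (n+2)" using Suc.IH by linarith
  also have "\<dots> \<le> real (Suc n + 2) * fact (n+2)" by fact
  also have "\<dots> = fact (Suc n + 2)" using e by simp
  finally show ?case .
qed

lemma exp_pos_bound:
  fixes x :: real assumes "0 \<le> x" "x < 3"
  shows "exp x \<le> 1 + x + x^2 / (2 * (1 - x/3))"
proof -
  have s: "(\<lambda>n. x^(n+2) / fact (n+2)) sums (exp x - (1 + x))"
    using sums_split_initial_segment[OF exp_converges[of x], of 2]
    by (simp add: numeral_2_eq_2 divide_inverse ac_simps)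
  have g: "(\<lambda>n. x^2/2 * (x/3)^n) sums (x^2/2 * (1 / (1 - x/3)))"
    by (rule sums_mult, rule geometric_sums) (use assms in auto)
  have "exp x - (1 + x) \<le> x^2/2 * (1 / (1 - x/3))"
  proof (rule sums_le[OF _ s g])
    fix n
    have fp: "(fact (n+2)::real) > 0" by simp
    have "x^(n+2) * (2 * 3^n) \<le> x^(n+2) * fact (n+2)"
      by (rule mult_left_mono[OF fact_bound]) (use assms in auto)
    then have "x^(n+2) / fact (n+2) \<le> x^(n+2) / (2*3^n)"
      using fp by (simp add: field_simps)
    also have "\<dots> = x^2/2 * (x/3)^n"
      by (simp add: power_add power_divide power2_eq_square)
    finally show "x^(n+2) / fact (n+2) \<le> x^2/2 * (x/3)^n" .
  qed
  then show ?thesis by (simp add: field_simps)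
qed

lemma exp_bern:
  fixes x c :: real assumes "x \<le> c" "0 \<le> c" "c < 3"
  shows "exp x \<le> 1 + x + x^2 / (2 * (1 - c/3))"
proof (cases "x \<le> 0")
  case True
  have "x^2/2 \<le> x^2 / (2 * (1 - c/3))"
    using assms by (intro divide_left_mono) (auto simp: field_simps)
  then show ?thesis using exp_neg_bound[OF True] by linarith
next
  case False
  have "x^2 / (2 * (1 - x/3)) \<le> x^2 / (2 * (1 - c/3))"
  proof (rule divide_left_mono)
    show "2 * (1 - c / 3) \<le> 2 * (1 - x / 3)" using assms(1) by (simp add: divide_right_mono)
    show "0 < 2 * (1 - x / 3) * (2 * (1 - c / 3))" using assms by (intro mult_pos_pos) auto
  qed simp
  moreover have "exp x \<le> 1 + x + x^2 / (2 * (1 - x/3))" using exp_pos_bound[of x] False assms by simp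
  ultimately show ?thesis by linarith
qed




locale prob_w =
  fixes K :: nat and w lv :: "nat \<Rightarrow> real"
  assumes w_nn: "\<And>k. k < K \<Longrightarrow> 0 \<le> w k"
    and w_sum: "(\<Sum>k<K. w k) = 1"
    and lv_rng: "\<And>k. k < K \<Longrightarrow> 0 \<le> lv k \<and> lv k \<le> 1"
begin

definition "hh = (\<Sum>k<K. w k * lv k)"
definition "vv = (\<Sum>k<K. w k * (lv k - hh)^2)"

lemma hh_rng: "0 \<le> hh \<and> hh \<le> 1"
proof
  show "0 \<le> hh" unfolding hh_def using w_nn lv_rng by (intro sum_nonneg) auto
  have "hh \<le> (\<Sum>k<K. w k * 1)" unfolding hh_def
    using w_nn lv_rng by (intro sum_mono mult_left_mono) auto
  then show "hh \<le> 1" using w_sum by simp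
qed

lemma vv_nn: "0 \<le> vv" unfolding vv_def using w_nn by (intro sum_nonneg) auto

lemma S_eq:
  "(\<Sum>k<K. w k * exp (- e * lv k)) = exp (- e * hh) * (\<Sum>k<K. w k * exp (e * (hh - lv k)))"
  by (simp add: sum_distrib_left algebra_simps exp_add[symmetric])

lemma S2_ge: "(\<Sum>k<K. w k * exp (e * (hh - lv k))) \<ge> 1"
proof -
  have "(\<Sum>k<K. w k * (1 + e * (hh - lv k))) \<le> (\<Sum>k<K. w k * exp (e * (hh - lv k)))"
    using w_nn by (intro sum_mono mult_left_mono) auto
  moreover have "(\<Sum>k<K. w k * (1 + e * (hh - lv k))) = 1"
    by (simp add: algebra_simps sum.distrib sum_subtractf w_sum hh_def sum_distrib_left[symmetric]
        flip: sum_distrib_right)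
  ultimately show ?thesis by simp
qed

lemma S_pos: "0 < (\<Sum>k<K. w k * exp (- e * lv k))"
proof -
  have "0 < (\<Sum>k<K. w k * exp (e * (hh - lv k)))" using S2_ge[of e] by linarith
  then show ?thesis by (simp only: S_eq) simp
qed

lemma ln_S: "ln (\<Sum>k<K. w k * exp (- e * lv k)) = - e * hh + ln (\<Sum>k<K. w k * exp (e * (hh - lv k)))"
proof -
  have p: "0 < (\<Sum>k<K. w k * exp (e * (hh - lv k)))" using S2_ge[of e] by linarith
  have "ln (exp (- e * hh) * (\<Sum>k<K. w k * exp (e * (hh - lv k)))) = - e * hh + ln (\<Sum>k<K. w k * exp (e * (hh - lv k)))"
    using p by (simp add: ln_mult)
  then show ?thesis by (simp only: S_eq)
qed

lemma gap_fin_nn: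
  assumes "e > 0"
  shows "0 \<le> hh + (1/e) * ln (\<Sum>k<K. w k * exp (- e * lv k))"
proof -
  note ln_S[of e]
  moreover have "ln (\<Sum>k<K. w k * exp (e * (hh - lv k))) \<ge> 0" using S2_ge by simp
  ultimately show ?thesis using assms by (simp add: field_simps)
qed

lemma gap_fin_le1:
  assumes "e > 0"
  shows "hh + (1/e) * ln (\<Sum>k<K. w k * exp (- e * lv k)) \<le> 1"
proof -
  have pos: "(\<Sum>k<K. w k * exp (- e * lv k)) > 0"
    by (rule S_pos)
  have "(\<Sum>k<K. w k * exp (- e * lv k)) \<le> (\<Sum>k<K. w k * 1)"
    using w_nn lv_rng assms by (intro sum_mono mult_left_mono) auto
  then have "ln (\<Sum>k<K. w k * exp (- e * lv k)) \<le> 0" using pos w_sum by simp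
  then have "(1/e) * ln (\<Sum>k<K. w k * exp (- e * lv k)) \<le> 0"
    using assms by (simp add: divide_nonpos_pos)
  then show ?thesis using hh_rng by linarith
qed

lemma gap_bern:
  assumes "e > 0" "e < 3"
  shows "(hh + (1/e) * ln (\<Sum>k<K. w k * exp (- e * lv k))) * (1 - e/3) \<le> e * vv / 2"
proof -
  define S where "S = (\<Sum>k<K. w k * exp (e * (hh - lv k)))"
  define q where "q = 2 * (1 - e/3)"
  have q: "q > 0" using assms unfolding q_def by simp
  have "S \<le> (\<Sum>k<K. w k * (1 + e * (hh - lv k) + (e * (hh - lv k))^2 / q))"
    unfolding S_def q_def
  proof (intro sum_mono mult_left_mono)
    fix k assume k: "k \<in> {..<K}"
    have "e * (hh - lv k) \<le> e * 1"
      using hh_rng lv_rng[of k] k assms by (intro mult_left_mono) auto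
    then show "exp (e * (hh - lv k)) \<le> 1 + e * (hh - lv k) + (e * (hh - lv k))\<^sup>2 / (2 * (1 - e / 3))"
      using assms by (intro exp_bern) auto
  qed (use w_nn in auto)
  also have "\<dots> = (\<Sum>k<K. w k * (1 + e * (hh - lv k)) + e^2 / q * (w k * (lv k - hh)^2))"
    using q by (intro sum.cong) (auto simp: field_simps power2_eq_square)
  also have "\<dots> = (\<Sum>k<K. w k * (1 + e * (hh - lv k))) + e^2 / q * vv"
    by (simp add: vv_def sum_distrib_left sum.distrib)
  also have "(\<Sum>k<K. w k * (1 + e * (hh - lv k))) = 1"
    by (simp add: algebra_simps sum.distrib sum_subtractf w_sum hh_def sum_distrib_left[symmetric]
        flip: sum_distrib_right)
  finally have Sle: "S \<le> 1 + e^2 / q * vv" .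
  have S1: "S \<ge> 1" unfolding S_def by (rule S2_ge)
  have "ln S \<le> S - 1" using S1 by (intro ln_le_minus_one) auto
  then have lnS: "ln S \<le> e^2 / q * vv" using Sle by linarith
  have "ln (\<Sum>k<K. w k * exp (- e * lv k)) = - e * hh + ln S"
    unfolding S_def by (rule ln_S)
  then have "hh + (1/e) * ln (\<Sum>k<K. w k * exp (- e * lv k)) = (1/e) * ln S"
    using assms by (simp add: field_simps)
  also have "\<dots> \<le> (1/e) * (e^2 / q * vv)"
    using lnS assms by (intro mult_left_mono) auto
  also have "\<dots> = e * vv / q" using assms by (simp add: power2_eq_square field_simps)
  finally have "hh + (1/e) * ln (\<Sum>k<K. w k * exp (- e * lv k)) \<le> e * vv / q" .
  then have "(hh + (1/e) * ln (\<Sum>k<K. w k * exp (- e * lv k))) * (1 - e/3) \<le> e * vv / q * (1 - e/3)"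
    using assms by (intro mult_right_mono) auto
  also have "\<dots> = e * vv / 2" using q unfolding q_def by (simp add: field_simps)
  finally show ?thesis .
qed

end



definition Phi :: "nat \<Rightarrow> ereal \<Rightarrow> (nat \<Rightarrow> real) \<Rightarrow> real" where
  "Phi K eta Lv = (if eta = PInfty then Min (Lv ` {..<K})
     else - (1 / real_of_ereal eta) * ln ((\<Sum>k<K. exp (- real_of_ereal eta * Lv k)) / real K))"

lemma lt_ne: "(K::nat) \<ge> 1 \<Longrightarrow> {..<K} \<noteq> {}"
proof -
  assume "K \<ge> 1" then have "0 \<in> {..<K}" by simp
  then show ?thesis by blast
qed

lemma ln_le_of: "0 < (x::real) \<Longrightarrow> x \<le> exp y \<Longrightarrow> ln x \<le> y"
  using ln_le_cancel_iff[of x "exp y"] by simp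

lemma sum_exp_pos: "(K::nat) \<ge> 1 \<Longrightarrow> 0 < (\<Sum>k<K. exp (f k :: real))"
  using lt_ne[of K] by (intro sum_pos) auto

lemma Phi_fin_le_inf:
  fixes K :: nat
  assumes K: "K \<ge> 1" and e: "e > 0"
  shows "Phi K PInfty Lv \<le> Phi K (ereal e) Lv"
proof -
  define m where "m = Min (Lv ` {..<K})"
  have mle: "\<And>k. k < K \<Longrightarrow> m \<le> Lv k" unfolding m_def by (intro Min_le) auto
  have "(\<Sum>k<K. exp (- e * Lv k)) \<le> (\<Sum>k<K. exp (- e * m))"
    using mle e by (intro sum_mono) auto
  then have "(\<Sum>k<K. exp (- e * Lv k)) / real K \<le> exp (- e * m)"
    using K by (simp add: field_simps)
  then have "ln ((\<Sum>k<K. exp (- e * Lv k)) / real K) \<le> - e * m"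
    using sum_exp_pos[OF K, of "\<lambda>k. - e * Lv k"] K
    by (intro ln_le_of) (auto simp: field_simps)
  then have "m \<le> - (1/e) * ln ((\<Sum>k<K. exp (- e * Lv k)) / real K)"
    using e by (simp add: field_simps)
  then show ?thesis unfolding Phi_def m_def by simp
qed

lemma Phi_fin_mono:
  fixes K :: nat
  assumes K: "K \<ge> 1" and e: "0 < e'" "e' \<le> e"
  shows "Phi K (ereal e) Lv \<le> Phi K (ereal e') Lv"
proof -
  define p where "p = e' / e"
  have p: "0 < p" "p \<le> 1" using e unfolding p_def by auto
  define S where "S = (\<Sum>k<K. exp (- e * Lv k))"
  have S: "S > 0" unfolding S_def by (rule sum_exp_pos[OF K])
  define m where "m = ln (S / real K)"
  have em: "exp m = S / K" unfolding m_def using S K by simp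
  have "(\<Sum>k<K. exp (- e' * Lv k)) \<le> (\<Sum>k<K. exp (p * m) * (1 + p * (exp (- e * Lv k - m) - 1)))"
  proof (intro sum_mono)
    fix k
    have "exp (- e' * Lv k) = exp (p * m) * exp (p * (- e * Lv k - m))"
      using e by (simp add: p_def exp_add[symmetric] field_simps)
    also have "\<dots> \<le> exp (p * m) * (1 + p * (exp (- e * Lv k - m) - 1))"
      using p by (intro mult_left_mono exp_conv_p) auto
    finally show "exp (- e' * Lv k) \<le> exp (p * m) * (1 + p * (exp (- e * Lv k - m) - 1))" .
  qed
  also have "\<dots> = exp (p * m) * (real K * (1 - p) + p * (\<Sum>k<K. exp (- e * Lv k)) / exp m)"
    by (simp add: sum_distrib_left sum.distrib sum_subtractf exp_diff algebra_simps sum_divide_distrib)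
  also have "\<dots> = exp (p * m) * real K"
    unfolding S_def[symmetric] using K S by (simp add: em field_simps)
  finally have "(\<Sum>k<K. exp (- e' * Lv k)) / real K \<le> exp (p * m)"
    using K by (simp add: field_simps)
  then have "ln ((\<Sum>k<K. exp (- e' * Lv k)) / real K) \<le> p * m"
    using sum_exp_pos[OF K, of "\<lambda>k. - e' * Lv k"] K
    by (intro ln_le_of) (auto simp: field_simps)
  then have "- (1/e') * (p * m) \<le> - (1/e') * ln ((\<Sum>k<K. exp (- e' * Lv k)) / real K)"
    using e by (intro mult_left_mono_neg) auto
  moreover have "- (1/e') * (p * m) = - (1/e) * m" using e unfolding p_def by simp
  ultimately show ?thesis unfolding Phi_def m_def S_def by simp
qed

lemma Phi_mono:
  fixes K :: nat
  assumes K: "K \<ge> 1"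
    and "eta' \<le> eta" and "eta' = PInfty \<or> (\<exists>e. eta' = ereal e \<and> e > 0)"
    and "eta = PInfty \<or> (\<exists>e. eta = ereal e \<and> e > 0)"
  shows "Phi K eta Lv \<le> Phi K eta' Lv"
  using assms Phi_fin_mono[OF K] Phi_fin_le_inf[OF K] by auto

lemma Phi_upper:
  fixes K :: nat
  assumes K: "K \<ge> 1" and e: "e > 0"
  shows "Phi K (ereal e) Lv \<le> Min (Lv ` {..<K}) + ln (real K) / e"
proof -
  have "Min (Lv ` {..<K}) \<in> Lv ` {..<K}" by (rule Min_in) (use lt_ne[OF K] in auto)
  then obtain j where j: "j < K" "Lv j = Min (Lv ` {..<K})" by auto
  have "exp (- e * Lv j) \<le> (\<Sum>k<K. exp (- e * Lv k))"
    using j by (intro member_le_sum) auto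
  then have "exp (- e * Lv j) / real K \<le> (\<Sum>k<K. exp (- e * Lv k)) / real K"
    by (intro divide_right_mono) auto
  then have "ln (exp (- e * Lv j) / real K) \<le> ln ((\<Sum>k<K. exp (- e * Lv k)) / real K)"
    using K sum_exp_pos[OF K, of "\<lambda>k. - e * Lv k"] by (subst ln_le_cancel_iff) auto
  moreover have "ln (exp (- e * Lv j) / real K) = - e * Lv j - ln (real K)"
    using K by (simp add: ln_div)
  ultimately have "- (1/e) * ln ((\<Sum>k<K. exp (- e * Lv k)) / real K) \<le> - (1/e) * (- e * Lv j - ln (real K))"
    using e by (intro mult_left_mono_neg) auto
  also have "\<dots> = Lv j + ln (real K) / e" using e by (simp add: field_simps)
  finally show ?thesis unfolding Phi_def using j by simp
qed

lemma Phi_zero: "(K::nat) \<ge> 1 \<Longrightarrow> Phi K eta (\<lambda>k. 0) = 0"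
  unfolding Phi_def using lt_ne[of K] by (auto simp: image_constant_conv)




lemma cumL_0[simp]: "cumL l 0 k = 0" by (simp add: cumL_def)
lemma cumL_Suc: "cumL l (Suc n) k = cumL l n k + l (Suc n) k"
  by (simp add: cumL_def)

lemma ew_props:
  fixes K :: nat assumes K: "K \<ge> 1"
  shows "(\<forall>k<K. 0 \<le> exp_weights K eta Lv k) \<and> (\<Sum>k<K. exp_weights K eta Lv k) = 1"
proof (cases "eta = PInfty")
  case True
  define m where "m = Min (Lv ` {..<K})"
  define A where "A = {j\<in>{..<K}. Lv j = m}"
  have "m \<in> Lv ` {..<K}" unfolding m_def by (rule Min_in) (use lt_ne[OF K] in auto)
  then have "A \<noteq> {}" unfolding A_def by auto
  moreover have fA: "finite A" unfolding A_def by auto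
  ultimately have cA: "card A > 0" by (simp add: card_gt_0_iff)
  have ew: "exp_weights K eta Lv k = (if Lv k = m then 1 / real (card A) else 0)" for k
    unfolding exp_weights_def using True by (simp add: m_def A_def Let_def)
  have "(\<Sum>k<K. exp_weights K eta Lv k) = (\<Sum>k<K. if Lv k = m then 1 / real (card A) else 0)"
    unfolding ew ..
  also have "\<dots> = (\<Sum>k\<in>A. 1 / real (card A))"
    using sum.inter_filter[of "{..<K}" "\<lambda>k. 1 / real (card A)" "\<lambda>k. Lv k = m"]
    by (simp only: A_def[symmetric] finite_lessThan)
  also have "\<dots> = 1" using cA by simp
  finally have s1: "(\<Sum>k<K. exp_weights K eta Lv k) = 1" .
  have "\<forall>k<K. 0 \<le> exp_weights K eta Lv k" unfolding ew by simp
  then show ?thesis using s1 by blast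
next
  case False
  define e where "e = real_of_ereal eta"
  have ew: "exp_weights K eta Lv k = exp (- e * Lv k) / (\<Sum>j<K. exp (- e * Lv j))" for k
    unfolding exp_weights_def e_def using False by simp
  have S: "0 < (\<Sum>j<K. exp (- e * Lv j))" by (rule sum_exp_pos[OF K])
  have "(\<Sum>k<K. exp_weights K eta Lv k) = (\<Sum>k<K. exp (- e * Lv k)) / (\<Sum>j<K. exp (- e * Lv j))"
    unfolding ew by (rule sum_divide_distrib[symmetric])
  also have "\<dots> = 1" using S by simp
  finally have s1: "(\<Sum>k<K. exp_weights K eta Lv k) = 1" .
  have "\<forall>k<K. 0 \<le> exp_weights K eta Lv k" unfolding ew using S by simp
  then show ?thesis using s1 by blast
qed

lemma mix_eq:
  fixes K :: nat assumes K: "K \<ge> 1" and eta: "eta = PInfty \<or> (\<exists>e. eta = ereal e)"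
  shows "mix_loss K l (Suc n) eta (exp_weights K eta (cumL l n))
       = Phi K eta (cumL l (Suc n)) - Phi K eta (cumL l n)"
proof (cases "eta = PInfty")
  case True
  then show ?thesis unfolding mix_loss_def Phi_def Lstar_def by simp
next
  case False
  then obtain e where e: "eta = ereal e" using eta by auto
  define S0 where "S0 = (\<Sum>j<K. exp (- e * cumL l n j))"
  define S1 where "S1 = (\<Sum>j<K. exp (- e * cumL l (Suc n) j))"
  have S0: "S0 > 0" unfolding S0_def by (rule sum_exp_pos[OF K])
  have S1: "S1 > 0" unfolding S1_def by (rule sum_exp_pos[OF K])
  have "(\<Sum>k<K. exp_weights K eta (cumL l n) k * exp (- e * l (Suc n) k))
      = (\<Sum>k<K. exp (- e * cumL l (Suc n) k) / S0)"
    by (intro sum.cong) (auto simp: exp_weights_def e S0_def cumL_Suc exp_add[symmetric] algebra_simps)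
  also have "\<dots> = S1 / S0" unfolding S1_def by (simp add: sum_divide_distrib)
  finally have sm: "(\<Sum>k<K. exp_weights K eta (cumL l n) k * exp (- e * l (Suc n) k)) = S1 / S0" .
  have lq: "ln (S1 / S0) = ln (S1 / real K) - ln (S0 / real K)"
    using S0 S1 K by (simp add: ln_div)
  have mx: "mix_loss K l (Suc n) eta (exp_weights K eta (cumL l n)) = - (1/e) * ln (S1 / S0)"
    unfolding mix_loss_def using e sm by simp
  have ph: "Phi K eta (cumL l (Suc n)) - Phi K eta (cumL l n) = - (1/e) * ln (S1 / real K) - (- (1/e) * ln (S0 / real K))"
    unfolding Phi_def S0_def S1_def using e by simp
  show ?thesis unfolding mx ph lq by (simp add: algebra_simps)
qed




locale ah =
  fixes K T :: nat and l :: "nat \<Rightarrow> nat \<Rightarrow> real"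
  assumes K: "K \<ge> 1"
    and rng: "\<And>t k. t \<in> {1..T} \<Longrightarrow> k < K \<Longrightarrow> 0 \<le> l t k \<and> l t k \<le> 1"
begin

abbreviation "D n \<equiv> ah_Delta K l n"
abbreviation "eta n \<equiv> ah_eta K (D n)"
definition "mixt n = mix_loss K l (Suc n) (eta n) (ah_weights K l (Suc n))"
definition "vt n = (\<Sum>k<K. ah_weights K l (Suc n) k * (l (Suc n) k - ah_h K l (Suc n))^2)"

lemma w_eq: "ah_weights K l (Suc n) = exp_weights K (eta n) (cumL l n)"
  unfolding ah_weights_def by simp

lemma D_Suc: "D (Suc n) = D n + (ah_h K l (Suc n) - mixt n)"
  by (simp add: ah_gap_def ah_h_def mixt_def w_eq Let_def)

lemma lnK: "ln (real K) \<ge> 0" using K by simp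

lemma Min_single: "Min ((f::nat\<Rightarrow>real) ` {..<1}) = f 0"
  by (simp add: lessThan_Suc)

lemma round:
  assumes n: "Suc n \<le> T" and Dn: "D n \<ge> 0" and K1: "K = 1 \<longrightarrow> D n = 0"
  defines "g \<equiv> ah_h K l (Suc n) - mixt n"
  shows "0 \<le> g \<and> g \<le> 1 \<and> (K = 1 \<longrightarrow> g = 0) \<and> 2 * D n * g \<le> ln (real K) * vt n + 2/3 * ln (real K) * g"
proof -
  have ew: "\<forall>k<K. 0 \<le> ah_weights K l (Suc n) k" "(\<Sum>k<K. ah_weights K l (Suc n) k) = 1"
    using ew_props[OF K] unfolding w_eq by auto
  have lr: "\<And>k. k < K \<Longrightarrow> 0 \<le> l (Suc n) k \<and> l (Suc n) k \<le> 1"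
    using rng n by auto
  interpret P: prob_w K "ah_weights K l (Suc n)" "l (Suc n)"
    by unfold_locales (use ew lr in auto)
  have hh: "P.hh = ah_h K l (Suc n)" unfolding P.hh_def ah_h_def hedge_loss_def ..
  have vv: "P.vv = vt n" unfolding P.vv_def vt_def hh ..
  show ?thesis
  proof (cases "D n = 0")
    case True
    have et: "eta n = PInfty" using True by (simp add: ah_eta_def)
    define m where "m = Min (cumL l n ` {..<K})"
    have mx: "mixt n = Lstar K l (Suc n) - Lstar K l n"
      unfolding mixt_def mix_loss_def using et by simp
    have wk: "ah_weights K l (Suc n) k = (if cumL l n k = m then 1 / real (card {j\<in>{..<K}. cumL l n j = m}) else 0)" for k
      unfolding w_eq exp_weights_def et m_def by (simp add: Let_def)
    have Ln: "Lstar K l n = m" unfolding Lstar_def m_def ..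
    have mle: "m \<le> cumL l n k" if "k < K" for k unfolding m_def using that by (intro Min_le) auto
    have mix0: "0 \<le> mixt n"
    proof -
      have "m \<le> Lstar K l (Suc n)" unfolding Lstar_def
        using lt_ne[OF K] mle lr by (auto simp: cumL_Suc intro!: Min.boundedI add_increasing2)
      then show ?thesis using mx Ln by simp
    qed
    have mixh: "mixt n \<le> P.hh"
    proof -
      have "ah_weights K l (Suc n) k * mixt n \<le> ah_weights K l (Suc n) k * l (Suc n) k" if k: "k < K" for k
      proof (cases "cumL l n k = m")
        case True
        have "Lstar K l (Suc n) \<le> cumL l (Suc n) k" unfolding Lstar_def using k by (intro Min_le) auto
        then have "mixt n \<le> l (Suc n) k" using mx Ln True by (simp add: cumL_Suc)
        then show ?thesis using ew k by (intro mult_left_mono) auto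
      next
        case False then show ?thesis by (simp add: wk)
      qed
      then have "(\<Sum>k<K. ah_weights K l (Suc n) k * mixt n) \<le> (\<Sum>k<K. ah_weights K l (Suc n) k * l (Suc n) k)"
        by (intro sum_mono) auto
      then show ?thesis using ew unfolding P.hh_def by (simp add: sum_distrib_right[symmetric])
    qed
    have g01: "0 \<le> g" "g \<le> 1" using mix0 mixh P.hh_rng hh unfolding g_def by auto
    have gK: "K = 1 \<longrightarrow> g = 0"
    proof
      assume K1: "K = 1"
      have Ls: "Lstar K l t = cumL l t 0" for t using K1 by (simp add: Lstar_def lessThan_Suc)
      have w0: "ah_weights K l (Suc n) 0 = 1" using ew K1 by simp
      have "ah_h K l (Suc n) = l (Suc n) 0" unfolding ah_h_def hedge_loss_def using K1 w0 by simp
      moreover have "mixt n = l (Suc n) 0"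
        unfolding mx Ls by (simp add: cumL_Suc)
      ultimately show "g = 0" unfolding g_def by simp
    qed
    have "0 \<le> ln (real K) * vt n + 2/3 * ln (real K) * g"
      using lnK P.vv_nn vv g01 by (intro add_nonneg_nonneg mult_nonneg_nonneg) auto
    then show ?thesis using g01 gK True by simp
  next
    case False
    then have Dp: "D n > 0" using Dn by simp
    have "K \<noteq> 1" using K1 False by blast
    then have K2: "K \<ge> 2" using K by linarith
    then have lK: "ln (real K) > 0" by simp
    define e where "e = ln (real K) / D n"
    have e: "e > 0" unfolding e_def using lK Dp by simp
    have et: "eta n = ereal e" using False by (simp add: ah_eta_def e_def)
    have De: "D n = ln (real K) / e" unfolding e_def using lK Dp by simp
    have gq: "g = P.hh + (1/e) * ln (\<Sum>k<K. ah_weights K l (Suc n) k * exp (- e * l (Suc n) k))"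
      unfolding g_def mixt_def mix_loss_def et hh by simp
    have g01: "0 \<le> g" "g \<le> 1" unfolding gq using P.gap_fin_nn[OF e] P.gap_fin_le1[OF e] by auto
    have bd: "2 * D n * g \<le> ln (real K) * vt n + 2/3 * ln (real K) * g"
    proof (cases "e < 3")
      case True
      have b: "g * (1 - e/3) \<le> e * vt n / 2" using P.gap_bern[OF e True] gq vv by simp
      have "(2 * ln (real K) / e) * (g * (1 - e/3)) \<le> (2 * ln (real K) / e) * (e * vt n / 2)"
        using b lK e by (intro mult_left_mono) auto
      then show ?thesis unfolding De using e by (simp add: field_simps)
    next
      case False
      have "2 * D n * g = ln (real K) * (2 * g / e)" unfolding De using e by (simp add: field_simps)
      also have "\<dots> \<le> ln (real K) * (2 * g / 3)"
        using False g01 e lK by (intro mult_left_mono divide_left_mono) auto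
      also have "\<dots> \<le> ln (real K) * vt n + 2/3 * ln (real K) * g"
        using lK P.vv_nn vv by simp
      finally show ?thesis .
    qed
    show ?thesis using g01 bd K2 by simp
  qed
qed


lemma D_inv: "n \<le> T \<Longrightarrow> D n \<ge> 0 \<and> (K = 1 \<longrightarrow> D n = 0)"
proof (induction n)
  case 0 then show ?case by simp
next
  case (Suc n)
  then have IH: "D n \<ge> 0" "K = 1 \<longrightarrow> D n = 0" by auto
  from round[OF Suc.prems IH] show ?case unfolding D_Suc using IH by auto
qed

lemma D_step: "Suc n \<le> T \<Longrightarrow> D n \<le> D (Suc n)"
  using round[of n] D_inv[of n] unfolding D_Suc by auto

lemma D_le: "m \<le> n \<Longrightarrow> n \<le> T \<Longrightarrow> D m \<le> D n"
proof (induction n)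
  case 0 then show ?case by simp
next
  case (Suc n)
  show ?case
  proof (cases "m = Suc n")
    case False
    then have "D m \<le> D n" using Suc by auto
    then show ?thesis using D_step[OF Suc.prems(2)] by linarith
  qed simp
qed

lemma eta_valid: "n \<le> T \<Longrightarrow> eta n = PInfty \<or> (\<exists>e. eta n = ereal e \<and> e > 0)"
proof -
  assume n: "n \<le> T"
  show ?thesis
  proof (cases "D n = 0")
    case True then show ?thesis by (simp add: ah_eta_def)
  next
    case False
    then have Dp: "D n > 0" using D_inv[OF n] by simp
    have "K \<noteq> 1" using D_inv[OF n] False by blast
    then have "K \<ge> 2" using K by linarith
    then have "ln (real K) > 0" by simp
    then show ?thesis using False Dp by (simp add: ah_eta_def)
  qed
qed

lemma eta_mono: "Suc n \<le> T \<Longrightarrow> eta (Suc n) \<le> eta n"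
proof -
  assume n: "Suc n \<le> T"
  show ?thesis
  proof (cases "D n = 0")
    case True then show ?thesis by (simp add: ah_eta_def)
  next
    case False
    then have Dp: "D n > 0" using D_inv[of n] n by simp
    have D2: "D n \<le> D (Suc n)" by (rule D_step[OF n])
    then have "D (Suc n) \<noteq> 0" using Dp by simp
    moreover have "ln (real K) / D (Suc n) \<le> ln (real K) / D n"
      using Dp D2 lnK by (intro divide_left_mono) auto
    ultimately show ?thesis using False by (simp add: ah_eta_def)
  qed
qed

lemma var_Suc: "ah_var K l (Suc n) = ah_var K l n + vt n"
  unfolding ah_var_def vt_def by simp

lemma sq: "n \<le> T \<Longrightarrow> (D n)^2 \<le> ln (real K) * ah_var K l n + (2/3 * ln (real K) + 1) * D n"
proof (induction n)
  case 0 then show ?case by (simp add: ah_var_def)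
next
  case (Suc n)
  have IH: "D n \<ge> 0" "K = 1 \<longrightarrow> D n = 0" using D_inv Suc.prems by auto
  define g where "g = ah_h K l (Suc n) - mixt n"
  have r: "0 \<le> g" "g \<le> 1" "2 * D n * g \<le> ln (real K) * vt n + 2/3 * ln (real K) * g"
    using round[OF Suc.prems IH] unfolding g_def by auto
  have gg: "g^2 \<le> g" using r by (simp add: power2_eq_square mult_left_le)
  have "(D (Suc n))^2 = (D n)^2 + 2 * D n * g + g^2"
    unfolding D_Suc g_def[symmetric] by (simp add: power2_eq_square algebra_simps)
  also have "\<dots> \<le> ln (real K) * ah_var K l n + (2/3 * ln (real K) + 1) * D n
       + (ln (real K) * vt n + 2/3 * ln (real K) * g) + g"
    using Suc r gg by simp
  also have "\<dots> = ln (real K) * ah_var K l (Suc n) + (2/3 * ln (real K) + 1) * D (Suc n)"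
    unfolding var_Suc D_Suc g_def[symmetric] by (simp add: algebra_simps)
  finally show ?case .
qed

lemma hsum: "n \<le> T \<Longrightarrow> (\<Sum>t\<in>{1..n}. ah_h K l t) = (\<Sum>t\<in>{1..n}. mixt (t - 1)) + D n"
  by (induction n) (auto simp del: ah_Delta.simps simp: D_Suc ah_Delta.simps(1))

lemma cumL0: "cumL l 0 = (\<lambda>k. 0)" by auto

lemma mixt_eq: "mixt n = Phi K (eta n) (cumL l (Suc n)) - Phi K (eta n) (cumL l n)"
proof -
  have "eta n = PInfty \<or> (\<exists>e. eta n = ereal e)" by (auto simp: ah_eta_def)
  then show ?thesis unfolding mixt_def w_eq by (rule mix_eq[OF K])
qed

lemma msum: "Suc m \<le> T \<Longrightarrow> (\<Sum>t\<in>{1..Suc m}. mixt (t - 1)) \<le> Phi K (eta m) (cumL l (Suc m))"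
proof (induction m)
  case 0 then show ?case by (simp add: mixt_eq cumL0 Phi_zero[OF K])
next
  case (Suc m)
  have "Phi K (eta m) (cumL l (Suc m)) \<le> Phi K (eta (Suc m)) (cumL l (Suc m))"
    using eta_mono[of m] eta_valid[of m] eta_valid[of "Suc m"] Suc.prems
    by (intro Phi_mono[OF K]) auto
  then show ?case using Suc by (simp add: mixt_eq)
qed

lemma quad:
  fixes x A b :: real
  assumes "0 \<le> x" "0 \<le> A" "0 \<le> b" "x^2 \<le> A + b * x"
  shows "x \<le> sqrt A + b"
proof (rule ccontr)
  assume "\<not> ?thesis"
  then have c: "x > sqrt A + b" by simp
  define s where "s = sqrt A"
  have s: "s \<ge> 0" "s^2 = A" using assms unfolding s_def by auto
  have "x * (x - b) > s * s"
  proof -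
    have "x - b > s" using c s_def by simp
    then have "x * (x - b) > x * s \<or> s = 0" using s assms c by (auto intro: mult_strict_left_mono)
    moreover have "x * s \<ge> s * s" using c s assms by (intro mult_right_mono) (auto simp: s_def)
    moreover have "s = 0 \<Longrightarrow> x * (x - b) > 0" using c assms s_def by (simp add: mult_pos_pos)
    ultimately show ?thesis by force
  qed
  then show False using assms(4) s by (simp add: power2_eq_square algebra_simps)
qed

lemma main:
  assumes T: "T \<ge> 1"
  shows "ah_regret K l T \<le> 2 * sqrt (ah_var K l T * ln (real K)) + 4/3 * ln (real K) + 2"
proof -
  obtain m where m: "T = Suc m" using T by (cases T) auto
  have "ah_regret K l T = (\<Sum>t\<in>{1..T}. mixt (t - 1)) + D T - Lstar K l T"
    unfolding ah_regret_def using hsum[of T] by simp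
  also have "\<dots> \<le> Phi K (eta m) (cumL l T) + D T - Lstar K l T"
    using msum[of m] m by simp
  also have "\<dots> \<le> 2 * D T"
  proof -
    have Dm: "D m \<le> D T" "0 \<le> D m" using D_le[of m T] D_inv[of m] m by auto
    have "Phi K (eta m) (cumL l T) \<le> Lstar K l T + D m"
    proof (cases "D m = 0")
      case True then show ?thesis by (simp add: ah_eta_def Phi_def Lstar_def)
    next
      case False
      then have Dp: "D m > 0" using Dm by simp
      have "K \<noteq> 1" using D_inv[of m] m False by auto
      then have "K \<ge> 2" using K by linarith
      then have lK: "ln (real K) > 0" by simp
      have e: "ln (real K) / D m > 0" using lK Dp by simp
      have "Phi K (eta m) (cumL l T) \<le> Min (cumL l T ` {..<K}) + ln (real K) / (ln (real K) / D m)"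
        using Phi_upper[OF K e] False by (simp add: ah_eta_def)
      then show ?thesis using lK Dp by (simp add: Lstar_def)
    qed
    then show ?thesis using Dm by simp
  qed
  also have "\<dots> \<le> 2 * (sqrt (ah_var K l T * ln (real K)) + (2/3 * ln (real K) + 1))"
  proof -
    have V: "0 \<le> ah_var K l T" unfolding ah_var_def
      using ew_props[OF K] by (intro sum_nonneg mult_nonneg_nonneg) (auto simp: ah_weights_def)
    have "D T \<le> sqrt (ln (real K) * ah_var K l T) + (2/3 * ln (real K) + 1)"
      using D_inv[of T] sq[of T] V lnK by (intro quad) auto
    then show ?thesis by (simp add: mult.commute)
  qed
  finally show ?thesis by (simp add: algebra_simps)
qed

end


theorem theorem6:
  fixes K T :: nat and l :: "nat \<Rightarrow> nat \<Rightarrow> real"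
  assumes "K \<ge> 1" and "T \<ge> 1"
    and "\<And>t k. t \<in> {1..T} \<Longrightarrow> k < K \<Longrightarrow> 0 \<le> l t k \<and> l t k \<le> 1"
  shows "ah_regret K l T \<le> 2 * sqrt (ah_var K l T * ln (real K)) + 4/3 * ln (real K) + 2"
proof -
  interpret ah K T l by unfold_locales (use assms in auto)
  show ?thesis by (rule main[OF assms(2)])
qed

end
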